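(* Let $n\ge1$, let $\mathcal{C}_{\text{Pauli}}$ be an $n$-qubit Pauli channel, and let $\mathcal{E}=\{(p_i,U_i)\}_{i=0}^{K-1}$ be a Pauli mixing unitary ensemble. Then $\mathbb{E}_{\mathcal{E}}(\mathcal{C}_{\text{Pauli}})=\mathcal{D}_{F(\mathcal{C}_{\text{Pauli}})}$.
   Context: $\mathcal{P}_n$ is the $n$-qubit Pauli group (tensor products of $I,X,Y,Z$ with phases in $\{\pm1,\pm i\}$), $\mathcal{Q}_n=\{P_a\}_{a=0}^{4^n-1}$ is the set of phase-free Pauli operators $X_{\vec x}Z_{\vec z}$ with $P_0=I^{\otimes n}$, $\mathcal{Q}_n^*=\mathcal{Q}_n\setminus\{I^{\otimes n}\}$, and $\pi:\mathcal{P}_n\to\mathcal{Q}_n$ removes the phase. A Pauli channel is $\mathcal{C}_{\text{Pauli}}(\rho)=\sum_a\chi_{aa}P_a\rho P_a$ with $\chi_{aa}\ge0$, $\sum_a\chi_{aa}=1$; its entanglement fidelity is $F(\mathcal{C}_{\text{Pauli}})=\chi_{00}$ (in general $F(\mathcal{C})=\langle\Phi_n|(\mathcal{I}\otimes\mathcal{C})(|\Phi_n\rangle\langle\Phi_n|)|\Phi_n\rangle$, $|\Phi_n\rangle=2^{-n/2}\sum_{\vec k}|\vec k\rangle|\vec k\rangle$). An ensemble $\mathcal{E}=\{(p_i,U_i)\}$ (probabilities $p_i$, unitaries $U_i$) is Pauli mixing if each $U_i$ satisfies $U_i^\dagger PU_i\in\mathcal{P}_n$ for all $P\in\mathcal{P}_n$,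 and for all $P,P'\in\mathcal{Q}_n^*$, $\sum_{i:\pi(U_i^\dagger PU_i)=P'}p_i=\frac{1}{4^n-1}$. The twirl is $\mathbb{E}_{\mathcal{E}}(\mathcal{C})(\rho)=\sum_ip_iU_i^\dagger\mathcal{C}(U_i\rho U_i^\dagger)U_i$, and $\mathcal{D}_p(\varphi)=p\varphi+\frac{1-p}{4^n-1}\sum_{P\in\mathcal{Q}_n^*}P\varphi P$. *)

theory Defs
  imports Complex_Main "Jordan_Normal_Form.Matrix"
begin

definition adj :: "complex mat \<Rightarrow> complex mat" where
  "adj A = mat (dim_col A) (dim_row A) (\<lambda>(i,j). cnj (A $$ (j,i)))"

definition kron :: "complex mat \<Rightarrow> complex mat \<Rightarrow> complex mat" where
  "kron A B = mat (dim_row A * dim_row B) (dim_col A * dim_col B)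
     (\<lambda>(i,j). A $$ (i div dim_row B, j div dim_col B) * B $$ (i mod dim_row B, j mod dim_col B))"

definition msum :: "nat \<Rightarrow> ('b \<Rightarrow> complex mat) \<Rightarrow> 'b set \<Rightarrow> complex mat" where
  "msum d f S = mat d d (\<lambda>ij. \<Sum>x\<in>S. f x $$ ij)"

(* single-qubit Paulis: 0 = I, 1 = X, 2 = Y, 3 = Z *)
definition pauli1 :: "nat \<Rightarrow> complex mat" where
  "pauli1 k = (if k = 0 then mat_of_rows_list 2 [[1,0],[0,1]]
     else if k = 1 then mat_of_rows_list 2 [[0,1],[1,0]]
     else if k = 2 then mat_of_rows_list 2 [[0,-\<i>],[\<i>,0]]
     else mat_of_rows_list 2 [[1,0],[0,-1]])"

definition pauli_string :: "nat list \<Rightarrow> complex mat" where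
  "pauli_string l = foldr (\<lambda>k M. kron (pauli1 k) M) l (1\<^sub>m 1)"

definition Qn :: "nat \<Rightarrow> complex mat set" where
  "Qn n = {pauli_string l | l. length l = n \<and> set l \<subseteq> {0,1,2,3}}"

definition Qn_star :: "nat \<Rightarrow> complex mat set" where
  "Qn_star n = Qn n - {1\<^sub>m (2^n)}"

definition phases :: "complex set" where
  "phases = {1, -1, \<i>, -\<i>}"

definition Pn :: "nat \<Rightarrow> complex mat set" where
  "Pn n = {c \<cdot>\<^sub>m P | c P. c \<in> phases \<and> P \<in> Qn n}"

definition pi_phase :: "nat \<Rightarrow> complex mat \<Rightarrow> complex mat" where
  "pi_phase n M = (THE P. P \<in> Qn n \<and> (\<exists>c\<in>phases. M = c \<cdot>\<^sub>m P))"

definition unitary_mat :: "nat \<Rightarrow> complex mat \<Rightarrow> bool" where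
  "unitary_mat d U \<longleftrightarrow> U \<in> carrier_mat d d \<and> U * adj U = 1\<^sub>m d"

definition pauli_channel :: "nat \<Rightarrow> (complex mat \<Rightarrow> real) \<Rightarrow> complex mat \<Rightarrow> complex mat" where
  "pauli_channel n chi \<rho> = msum (2^n) (\<lambda>P. complex_of_real (chi P) \<cdot>\<^sub>m (P * \<rho> * P)) (Qn n)"

definition is_pauli_channel_coeffs :: "nat \<Rightarrow> (complex mat \<Rightarrow> real) \<Rightarrow> bool" where
  "is_pauli_channel_coeffs n chi \<longleftrightarrow> (\<forall>P\<in>Qn n. chi P \<ge> 0) \<and> (\<Sum>P\<in>Qn n. chi P) = 1"

definition pauli_mixing :: "nat \<Rightarrow> nat \<Rightarrow> (nat \<Rightarrow> real) \<Rightarrow> (nat \<Rightarrow> complex mat) \<Rightarrow> bool" where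
  "pauli_mixing n K p U \<longleftrightarrow>
     (\<forall>i<K. p i \<ge> 0) \<and> (\<Sum>i<K. p i) = 1 \<and>
     (\<forall>i<K. unitary_mat (2^n) (U i)) \<and>
     (\<forall>i<K. \<forall>P\<in>Pn n. adj (U i) * P * U i \<in> Pn n) \<and>
     (\<forall>P\<in>Qn_star n. \<forall>P'\<in>Qn_star n.
        (\<Sum>i\<in>{i. i < K \<and> pi_phase n (adj (U i) * P * U i) = P'}. p i) = 1 / (4^n - 1))"

definition twirl :: "nat \<Rightarrow> nat \<Rightarrow> (nat \<Rightarrow> real) \<Rightarrow> (nat \<Rightarrow> complex mat)
    \<Rightarrow> (complex mat \<Rightarrow> complex mat) \<Rightarrow> complex mat \<Rightarrow> complex mat" where
  "twirl n K p U C \<rho> = msum (2^n)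
     (\<lambda>i. complex_of_real (p i) \<cdot>\<^sub>m (adj (U i) * C (U i * \<rho> * adj (U i)) * U i)) {..<K}"

definition depol :: "nat \<Rightarrow> complex \<Rightarrow> complex mat \<Rightarrow> complex mat" where
  "depol n q \<phi> = q \<cdot>\<^sub>m \<phi> + ((1 - q) / (4^n - 1)) \<cdot>\<^sub>m msum (2^n) (\<lambda>P. P * \<phi> * P) (Qn_star n)"

(* (I \<otimes> C)(M) for M of dimension d*d, first tensor factor = block index *)
definition id_tensor :: "nat \<Rightarrow> (complex mat \<Rightarrow> complex mat) \<Rightarrow> complex mat \<Rightarrow> complex mat" where
  "id_tensor d C M = mat (d*d) (d*d) (\<lambda>(r,s).
      C (mat d d (\<lambda>(a,b). M $$ ((r div d) * d + a, (s div d) * d + b))) $$ (r mod d, s mod d))"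

(* |Phi_n> = 2^{-n/2} sum_k |k>|k>, as a column matrix *)
definition Phi :: "nat \<Rightarrow> complex mat" where
  "Phi n = mat (2^n * 2^n) 1 (\<lambda>(r,_). if r div 2^n = r mod 2^n
      then complex_of_real (1 / sqrt (2^n)) else 0)"

definition ent_fid :: "nat \<Rightarrow> (complex mat \<Rightarrow> complex mat) \<Rightarrow> complex" where
  "ent_fid n C = (adj (Phi n) * id_tensor (2^n) C (Phi n * adj (Phi n)) * Phi n) $$ (0,0)"

end

theory Submission
  imports Defs "Jordan_Normal_Form.Determinant"
begin

lemma mult_entry:
  assumes "A \<in> carrier_mat a b" "B \<in> carrier_mat b c" "i < a" "j < c"
  shows "(A * B) $$ (i,j) = (\<Sum>k<b. A $$ (i,k) * B $$ (k,j))"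
  using assms by (auto simp: scalar_prod_def lessThan_atLeast0 intro!: sum.cong)

lemma kron_carrier[simp]: "kron A B \<in> carrier_mat (dim_row A * dim_row B) (dim_col A * dim_col B)"
  by (simp add: kron_def)

lemma kron_dims[simp]: "dim_row (kron A B) = dim_row A * dim_row B" "dim_col (kron A B) = dim_col A * dim_col B"
  by (simp_all add: kron_def)

lemma kron_index[simp]: "i < dim_row A * dim_row B \<Longrightarrow> j < dim_col A * dim_col B \<Longrightarrow>
  kron A B $$ (i,j) = A $$ (i div dim_row B, j div dim_col B) * B $$ (i mod dim_row B, j mod dim_col B)"
  by (simp add: kron_def)

lemma mrl_carrier: "mat_of_rows_list 2 [[a,b],[c,d::complex]] \<in> carrier_mat 2 2"
  unfolding mat_of_rows_list_def by (simp only: mat_carrier length_Cons list.size numeral_2_eq_2 add_0 add_Suc_right)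
lemma pauli1_carrier[simp]: "pauli1 k \<in> carrier_mat 2 2"
  unfolding pauli1_def by (simp only: mrl_carrier if_cancel simp_thms split: if_split)

lemma p0: "mat_of_rows_list 2 [[a,b],[c,d::complex]] $$ (0,0) = a"
  "mat_of_rows_list 2 [[a,b],[c,d::complex]] $$ (0,Suc 0) = b"
  "mat_of_rows_list 2 [[a,b],[c,d::complex]] $$ (Suc 0,0) = c"
  "mat_of_rows_list 2 [[a,b],[c,d::complex]] $$ (Suc 0,Suc 0) = d"
  by (auto simp: mat_of_rows_list_def)
lemma pauli1_index: "i < 2 \<Longrightarrow> j < 2 \<Longrightarrow> pauli1 k $$ (i,j) =
  (if k = 0 then (if i = j then 1 else 0)
   else if k = 1 then (if i = j then 0 else 1)
   else if k = 2 then (if i = j then 0 else if i = 0 then -\<i> else \<i>)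
   else (if i \<noteq> j then 0 else if i = 0 then 1 else -1))"
  unfolding pauli1_def less_2_cases_iff by (elim disjE) (simp_all add: p0)

lemma pauli1_dims[simp]: "dim_row (pauli1 k) = 2" "dim_col (pauli1 k) = 2"
  using carrier_matD[OF pauli1_carrier[of k]] by auto

lemma pauli_string_carrier: "pauli_string l \<in> carrier_mat (2^length l) (2^length l)"
  by (induction l) (auto simp: pauli_string_def)

lemma pauli_string_dims[simp]: "dim_row (pauli_string l) = 2^length l" "dim_col (pauli_string l) = 2^length l"
  using pauli_string_carrier[of l] by auto

lemma pauli_string_Cons: "pauli_string (k # l) = kron (pauli1 k) (pauli_string l)"
  by (simp add: pauli_string_def)

lemma adj_dims[simp]: "dim_row (adj A) = dim_col A" "dim_col (adj A) = dim_row A"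
  by (simp_all add: adj_def)

lemma adj_index[simp]: "i < dim_col A \<Longrightarrow> j < dim_row A \<Longrightarrow> adj A $$ (i,j) = cnj (A $$ (j,i))"
  by (simp add: adj_def)

lemma adj_carrier[simp]: "A \<in> carrier_mat a b \<Longrightarrow> adj A \<in> carrier_mat b a"
  by (rule carrier_matI) (auto dest: carrier_matD)

lemma adj_adj[simp]: "adj (adj A) = A"
  by (rule eq_matI) auto

lemma adj_mult: assumes A: "A \<in> carrier_mat a b" and B: "B \<in> carrier_mat b c"
  shows "adj (A * B) = adj B * adj A"
proof (rule eq_matI)
  fix i j assume ij: "i < dim_row (adj B * adj A)" "j < dim_col (adj B * adj A)"
  have i: "i < c" and j: "j < a" using A B ij by auto
  have "adj (A * B) $$ (i,j) = cnj ((A * B) $$ (j,i))" using A B i j by simp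
  also have "\<dots> = (\<Sum>k<b. cnj (A $$ (j,k)) * cnj (B $$ (k,i)))"
    by (simp add: mult_entry[OF A B j i])
  also have "\<dots> = (adj B * adj A) $$ (i,j)"
    using A B i j by (subst mult_entry[of _ c b _ a]) (auto simp: mult.commute)
  finally show "adj (A * B) $$ (i,j) = (adj B * adj A) $$ (i,j)" .
next
  show "dim_row (adj (A * B)) = dim_row (adj B * adj A)" using A B by simp
  show "dim_col (adj (A * B)) = dim_col (adj B * adj A)" using A B by simp
qed

lemma adj_smult: "adj (c \<cdot>\<^sub>m A) = cnj c \<cdot>\<^sub>m adj A"
  by (rule eq_matI) auto

lemma div_mod_bounds: "(i::nat) < a * b \<Longrightarrow> i div b < a \<and> i mod b < b"
proof -
  assume h: "i < a * b"
  then have "b > 0" by (cases b) auto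
  then show ?thesis using h by (simp add: less_mult_imp_div_less)
qed

lemma adj_kron: "adj (kron A B) = kron (adj A) (adj B)"
proof (rule eq_matI)
  fix i j assume "i < dim_row (kron (adj A) (adj B))" "j < dim_col (kron (adj A) (adj B))"
  then have i: "i < dim_col A * dim_col B" and j: "j < dim_row A * dim_row B" by auto
  from div_mod_bounds[OF i] div_mod_bounds[OF j]
  show "adj (kron A B) $$ (i, j) = kron (adj A) (adj B) $$ (i, j)"
    using i j by simp
qed simp_all

lemma adj_pauli1: "adj (pauli1 k) = pauli1 k"
proof (rule eq_matI)
  fix i j assume "i < dim_row (pauli1 k)" "j < dim_col (pauli1 k)"
  then have "i < 2" "j < 2" by auto
  then show "adj (pauli1 k) $$ (i, j) = pauli1 k $$ (i, j)"
    by (simp add: pauli1_index)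
qed simp_all

lemma adj_one[simp]: "adj (1\<^sub>m d) = 1\<^sub>m d"
  by (rule eq_matI) auto

lemma adj_pauli_string: "adj (pauli_string l) = pauli_string l"
proof (induction l)
  case Nil
  show ?case by (simp add: pauli_string_def)
next
  case (Cons k l)
  then show ?case by (simp add: pauli_string_Cons adj_kron adj_pauli1)
qed

lemma sum_divmod: "(\<Sum>r<(a::nat)*b. f (r div b) (r mod b)) = (\<Sum>x<a. \<Sum>y<b. (f x y :: 'c::comm_monoid_add))"
proof -
  have bij: "bij_betw (\<lambda>(x,y). x*b+y) ({..<a} \<times> {..<b}) {..<a*b}"
  proof (rule bij_betw_imageI)
    show "inj_on (\<lambda>(x, y). x * b + y) ({..<a} \<times> {..<b})"
    proof (rule inj_onI, clarify)
      fix x y x' y' assume "x*b+y = x'*b+y'" "y < b" "y' < b"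
      then show "x = x' \<and> y = y'"
        by (metis add.commute div_mult_self1 div_less mod_mult_self1 mod_less add_0 gr_implies_not0)
    qed
    show "(\<lambda>(x, y). x * b + y) ` ({..<a} \<times> {..<b}) = {..<a * b}"
    proof
      show "(\<lambda>(x, y). x * b + y) ` ({..<a} \<times> {..<b}) \<subseteq> {..<a * b}"
      proof -
        have aux: "x * b + y < a * b" if "x < a" "y < b" for x y
        proof -
          have "x * b + y < x * b + b" using that by simp
          also have "\<dots> = Suc x * b" by simp
          also have "\<dots> \<le> a * b" using \<open>x < a\<close> by (intro mult_right_mono) auto
          finally show ?thesis .
        qed
        show ?thesis using aux by auto
      qed
      show "{..<a * b} \<subseteq> (\<lambda>(x, y). x * b + y) ` ({..<a} \<times> {..<b})"
      proof
        fix r assume "r \<in> {..<a*b}"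
        then have "r div b < a" "r mod b < b" using div_mod_bounds by auto
        moreover have "r = (r div b) * b + r mod b" by simp
        ultimately show "r \<in> (\<lambda>(x, y). x * b + y) ` ({..<a} \<times> {..<b})" by force
      qed
    qed
  qed
  have "(\<Sum>r<a*b. f (r div b) (r mod b)) = (\<Sum>(x,y)\<in>{..<a} \<times> {..<b}. f ((x*b+y) div b) ((x*b+y) mod b))"
    using sum.reindex_bij_betw[OF bij, of "\<lambda>r. f (r div b) (r mod b)"] by (simp add: case_prod_unfold)
  also have "\<dots> = (\<Sum>(x,y)\<in>{..<a} \<times> {..<b}. f x y)"
    by (intro sum.cong refl) auto
  also have "\<dots> = (\<Sum>x<a. \<Sum>y<b. f x y)"
    by (simp add: sum.cartesian_product)
  finally show ?thesis .
qed

lemma kron_index2: assumes "A \<in> carrier_mat a1 a2" "B \<in> carrier_mat b1 b2"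
  "x < a1" "y < a2" "u < b1" "v < b2"
  shows "kron A B $$ (x*b1+u, y*b2+v) = A $$ (x,y) * B $$ (u,v)"
proof -
  have "x*b1+u < a1*b1" using assms(3,5)
    by (metis add_less_cancel_left less_le_trans mult_Suc mult_le_mono1 Suc_leI add.commute)
  moreover have "y*b2+v < a2*b2" using assms(4,6)
    by (metis add_less_cancel_left less_le_trans mult_Suc mult_le_mono1 Suc_leI add.commute)
  ultimately show ?thesis using assms by auto
qed

lemma pauli1_0: "pauli1 0 = 1\<^sub>m 2"
proof (rule eq_matI)
  fix i j assume "i < dim_row (1\<^sub>m 2)" "j < dim_col (1\<^sub>m 2)"
  then have "i < 2" "j < 2" by auto
  then show "pauli1 0 $$ (i, j) = 1\<^sub>m 2 $$ (i, j)" by (simp add: pauli1_index)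
qed simp_all

lemma kron_one: "kron (1\<^sub>m a) (1\<^sub>m b) = 1\<^sub>m (a*b)"
proof (rule eq_matI)
  fix i j assume "i < dim_row (1\<^sub>m (a*b))" "j < dim_col (1\<^sub>m (a*b))"
  then have i: "i < a*b" and j: "j < a*b" by auto
  have "(i div b = j div b \<and> i mod b = j mod b) = (i = j)"
    by (metis div_mult_mod_eq)
  then show "kron (1\<^sub>m a) (1\<^sub>m b) $$ (i, j) = 1\<^sub>m (a*b) $$ (i, j)"
    using i j div_mod_bounds[OF i] div_mod_bounds[OF j] by auto
qed simp_all

lemma pauli_string_rep0: "pauli_string (replicate m 0) = 1\<^sub>m (2^m)"
proof (induction m)
  case 0 then show ?case by (simp add: pauli_string_def)
next
  case (Suc m) then show ?case by (simp add: pauli_string_Cons pauli1_0 kron_one)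
qed

lemma one_in_Qn: "1\<^sub>m (2^n) \<in> Qn n"
  unfolding Qn_def using pauli_string_rep0[of n] by (intro CollectI exI[of _ "replicate n 0"]) auto

lemma finite_Qn: "finite (Qn n)"
proof -
  have "Qn n = pauli_string ` {l. set l \<subseteq> {0,1,2,3} \<and> length l = n}" unfolding Qn_def by auto
  moreover have "finite {l. set l \<subseteq> {0::nat,1,2,3} \<and> length l = n}"
    by (rule finite_lists_length_eq) simp
  ultimately show ?thesis by simp
qed

lemma Qn_carrier: "P \<in> Qn n \<Longrightarrow> P \<in> carrier_mat (2^n) (2^n)"
  unfolding Qn_def using pauli_string_carrier by auto

lemma Qn_adj: "P \<in> Qn n \<Longrightarrow> adj P = P"
  unfolding Qn_def using adj_pauli_string by auto

lemma pauli1_nz: "pauli1 k $$ (0, if k = 1 \<or> k = 2 then 1 else 0) \<noteq> 0"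
  by (simp add: pauli1_index)

lemma pauli_string_nz: "\<exists>i j. i < 2^length l \<and> j < 2^length l \<and> pauli_string l $$ (i,j) \<noteq> 0"
proof (induction l)
  case Nil then show ?case by (simp add: pauli_string_def)
next
  case (Cons k l)
  then obtain u v where uv: "u < 2^length l" "v < 2^length l" "pauli_string l $$ (u,v) \<noteq> 0" by blast
  let ?y = "if k = 1 \<or> k = 2 then 1 else 0::nat"
  have y: "?y < 2" by simp
  have e: "pauli_string (k # l) $$ (0 * 2^length l + u, ?y * 2^length l + v) = pauli1 k $$ (0, ?y) * pauli_string l $$ (u,v)"
    unfolding pauli_string_Cons by (rule kron_index2[OF pauli1_carrier pauli_string_carrier]) (use uv y in auto)
  have "?y * 2^length l + v < 2 * 2^length l" using y uv(2)
    by (metis add_less_cancel_left less_le_trans mult_Suc mult_le_mono1 Suc_leI add.commute)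
  moreover have "0 * 2^length l + u < 2 * 2^length l" using uv by simp
  moreover have "pauli_string (k # l) $$ (0 * 2^length l + u, ?y * 2^length l + v) \<noteq> 0"
    unfolding e using pauli1_nz[of k] uv(3) by simp
  ultimately show ?case by (intro exI) auto
qed

lemma pauli1_prop:
  assumes "k \<in> {0,1,2,3}" "k' \<in> {0,1,2,3}"
    and h: "\<And>x y. x < 2 \<Longrightarrow> y < 2 \<Longrightarrow> pauli1 k $$ (x,y) = \<mu> * pauli1 k' $$ (x,y)"
  shows "k = k'"
proof -
  have e00: "pauli1 k $$ (0,0) = \<mu> * pauli1 k' $$ (0,0)" by (rule h) auto
  have e01: "pauli1 k $$ (0,1) = \<mu> * pauli1 k' $$ (0,1)" by (rule h) auto
  have e10: "pauli1 k $$ (1,0) = \<mu> * pauli1 k' $$ (1,0)" by (rule h) auto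
  have e11: "pauli1 k $$ (1,1) = \<mu> * pauli1 k' $$ (1,1)" by (rule h) auto
  have c1: "pauli1 k $$ (0,0) * pauli1 k' $$ (0,1) = pauli1 k $$ (0,1) * pauli1 k' $$ (0,0)"
    unfolding e00 e01 by (simp add: ac_simps)
  have c2: "pauli1 k $$ (0,0) * pauli1 k' $$ (1,1) = pauli1 k $$ (1,1) * pauli1 k' $$ (0,0)"
    unfolding e00 e11 by (simp add: ac_simps)
  have c3: "pauli1 k $$ (0,1) * pauli1 k' $$ (1,0) = pauli1 k $$ (1,0) * pauli1 k' $$ (0,1)"
    unfolding e01 e10 by (simp add: ac_simps)
  show ?thesis
  proof (rule ccontr)
    assume ne: "k \<noteq> k'"
    from assms(1,2) ne c1 c2 c3 show False
      by (simp add: pauli1_index) (elim disjE; simp)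
  qed
qed

lemma pauli_string_prop:
  assumes "set l \<subseteq> {0,1,2,3}" "set l' \<subseteq> {0,1,2,3}" "length l = length l'"
    and "pauli_string l = c \<cdot>\<^sub>m pauli_string l'"
  shows "l = l'"
  using assms
proof (induction l arbitrary: l' c)
  case Nil then show ?case by simp
next
  case (Cons k l)
  from Cons.prems obtain k' l2 where l': "l' = k' # l2" by (cases l') auto
  let ?d = "2^length l :: nat"
  have len: "length l2 = length l" using Cons.prems l' by simp
  have kk: "k \<in> {0,1,2,3}" "k' \<in> {0,1,2,3}" using Cons.prems l' by auto
  have sets: "set l \<subseteq> {0,1,2,3}" "set l2 \<subseteq> {0,1,2,3}" using Cons.prems l' by auto
  have ent: "pauli1 k $$ (x,y) * pauli_string l $$ (u,v) = c * (pauli1 k' $$ (x,y) * pauli_string l2 $$ (u,v))"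
    if "x < 2" "y < 2" "u < ?d" "v < ?d" for x y u v
  proof -
    have b1: "x * ?d + u < 2 * ?d" using that
      by (metis add_less_cancel_left less_le_trans mult_Suc mult_le_mono1 Suc_leI add.commute)
    have b2: "y * ?d + v < 2 * ?d" using that
      by (metis add_less_cancel_left less_le_trans mult_Suc mult_le_mono1 Suc_leI add.commute)
    have "pauli_string (k # l) $$ (x * ?d + u, y * ?d + v) = (c \<cdot>\<^sub>m pauli_string (k' # l2)) $$ (x * ?d + u, y * ?d + v)"
      using Cons.prems(4) l' by simp
    moreover have "pauli_string (k # l) $$ (x * ?d + u, y * ?d + v) = pauli1 k $$ (x,y) * pauli_string l $$ (u,v)"
      unfolding pauli_string_Cons by (rule kron_index2[OF pauli1_carrier pauli_string_carrier]) (use that in auto)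
    moreover have "pauli_string (k' # l2) $$ (x * ?d + u, y * ?d + v) = pauli1 k' $$ (x,y) * pauli_string l2 $$ (u,v)"
      unfolding pauli_string_Cons using kron_index2[OF pauli1_carrier pauli_string_carrier[of l2], of x y u v] that len by simp
    moreover have "(c \<cdot>\<^sub>m pauli_string (k' # l2)) $$ (x * ?d + u, y * ?d + v) = c * pauli_string (k' # l2) $$ (x * ?d + u, y * ?d + v)"
      using b1 b2 len by simp
    ultimately show ?thesis by simp
  qed
  obtain u0 v0 where uv: "u0 < ?d" "v0 < ?d" "pauli_string l $$ (u0,v0) \<noteq> 0"
    using pauli_string_nz[of l] by blast
  have "k = k'"
  proof (rule pauli1_prop[OF kk])
    fix x y :: nat assume "x < 2" "y < 2"
    from ent[OF this uv(1,2)] uv(3)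
    show "pauli1 k $$ (x,y) = (c * pauli_string l2 $$ (u0,v0) / pauli_string l $$ (u0,v0)) * pauli1 k' $$ (x,y)"
      by (simp add: field_simps)
  qed
  let ?y = "if k = 1 \<or> k = 2 then 1 else 0::nat"
  have "pauli_string l = c \<cdot>\<^sub>m pauli_string l2"
  proof (rule eq_matI)
    fix u v assume "u < dim_row (c \<cdot>\<^sub>m pauli_string l2)" "v < dim_col (c \<cdot>\<^sub>m pauli_string l2)"
    then have uv': "u < ?d" "v < ?d" using len by auto
    from ent[of 0 ?y u v, OF _ _ uv'] pauli1_nz[of k] \<open>k = k'\<close> uv'
    show "pauli_string l $$ (u, v) = (c \<cdot>\<^sub>m pauli_string l2) $$ (u, v)"
      using len by simp
  qed (use len in simp_all)
  then have "l = l2" using Cons.IH[OF sets(1) sets(2) len[symmetric]] by blast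
  then show ?case using l' \<open>k = k'\<close> by simp
qed

lemma Qn_prop: assumes "P \<in> Qn n" "Q \<in> Qn n" "P = c \<cdot>\<^sub>m Q" shows "P = Q"
proof -
  obtain l where l: "P = pauli_string l" "length l = n" "set l \<subseteq> {0,1,2,3}" using assms(1) unfolding Qn_def by blast
  obtain l' where l': "Q = pauli_string l'" "length l' = n" "set l' \<subseteq> {0,1,2,3}" using assms(2) unfolding Qn_def by blast
  have "l = l'" using pauli_string_prop[of l l' c] l l' assms(3) by simp
  then show ?thesis using l l' by simp
qed

lemma Qn_one_iff: assumes "set l \<subseteq> {0,1,2,3}" shows "pauli_string l = 1\<^sub>m (2^length l) \<longleftrightarrow> set l \<subseteq> {0}"
proof
  assume h: "pauli_string l = 1\<^sub>m (2^length l)"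
  have "l = replicate (length l) 0"
    by (rule pauli_string_prop[of _ _ 1]) (use assms h pauli_string_rep0[of "length l"] in auto)
  then show "set l \<subseteq> {0}" by (metis in_set_replicate singletonI subsetI)
next
  assume "set l \<subseteq> {0}"
  then have "l = replicate (length l) 0" by (intro replicate_eqI) auto
  then show "pauli_string l = 1\<^sub>m (2^length l)" by (metis pauli_string_rep0)
qed

lemma trace_pauli1: "(\<Sum>x<2. pauli1 k $$ (x,x)) = (if k = 0 then 2 else 0)"
  by (simp add: pauli1_index numeral_2_eq_2)

lemma trace_pauli_string: "set l \<subseteq> {0,1,2,3} \<Longrightarrow>
  (\<Sum>a<2^length l. pauli_string l $$ (a,a)) = (if set l \<subseteq> {0} then 2^length l else 0)"
proof (induction l)
  case Nil then show ?case by (simp add: pauli_string_def)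
next
  case (Cons k l)
  let ?d = "2^length l :: nat"
  have "(\<Sum>a<2^length (k#l). pauli_string (k#l) $$ (a,a))
      = (\<Sum>r<2*?d. pauli1 k $$ (r div ?d, r div ?d) * pauli_string l $$ (r mod ?d, r mod ?d))"
    by (intro sum.cong) (auto simp: pauli_string_Cons)
  also have "\<dots> = (\<Sum>x<2. \<Sum>y<?d. pauli1 k $$ (x,x) * pauli_string l $$ (y,y))"
    by (rule sum_divmod)
  also have "\<dots> = (\<Sum>x<2. pauli1 k $$ (x,x)) * (\<Sum>y<?d. pauli_string l $$ (y,y))"
    by (simp add: sum_product)
  also have "\<dots> = (if set (k#l) \<subseteq> {0} then 2^length (k#l) else 0)"
    using Cons by (simp add: trace_pauli1)
  finally show ?case .
qed

lemma trace_Qn: assumes "P \<in> Qn n"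
  shows "(\<Sum>a<2^n. P $$ (a,a)) = (if P = 1\<^sub>m (2^n) then 2^n else 0)"
proof -
  obtain l where l: "P = pauli_string l" "length l = n" "set l \<subseteq> {0,1,2,3}" using assms unfolding Qn_def by blast
  show ?thesis using trace_pauli_string[OF l(3)] Qn_one_iff[OF l(3)] l by simp
qed

lemma smult_smult_mat: "a \<cdot>\<^sub>m (b \<cdot>\<^sub>m A) = (a * b :: complex) \<cdot>\<^sub>m A"
  by (rule eq_matI) auto

lemma smult_one_mat1: "(1::complex) \<cdot>\<^sub>m A = A"
  by (rule eq_matI) auto


lemma pi_phase_eq: assumes "c \<in> phases" "Q \<in> Qn n" "M = c \<cdot>\<^sub>m Q" shows "pi_phase n M = Q"
  unfolding pi_phase_def
proof (rule the_equality)
  show "Q \<in> Qn n \<and> (\<exists>c\<in>phases. M = c \<cdot>\<^sub>m Q)" using assms by blast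
next
  fix Q' assume "Q' \<in> Qn n \<and> (\<exists>c\<in>phases. M = c \<cdot>\<^sub>m Q')"
  then obtain c' where Q': "Q' \<in> Qn n" "c' \<in> phases" "M = c' \<cdot>\<^sub>m Q'" by blast
  have "c' \<noteq> 0" using Q'(2) unfolding phases_def by auto
  have "Q' = (1/c') \<cdot>\<^sub>m (c' \<cdot>\<^sub>m Q')" using \<open>c' \<noteq> 0\<close> by (simp add: smult_smult_mat smult_one_mat1)
  also have "\<dots> = (1/c') \<cdot>\<^sub>m (c \<cdot>\<^sub>m Q)" using Q'(3) assms(3) by simp
  also have "\<dots> = (c/c') \<cdot>\<^sub>m Q" by (simp add: smult_smult_mat)
  finally show "Q' = Q" using Qn_prop[OF Q'(1) assms(2)] by blast
qed

lemma msum_index[simp]: "i < d \<Longrightarrow> j < d \<Longrightarrow> msum d f S $$ (i,j) = (\<Sum>x\<in>S. f x $$ (i,j))"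
  by (simp add: msum_def)

lemma msum_carrier[simp]: "msum d f S \<in> carrier_mat d d"
  by (simp add: msum_def)

lemma msum_dims[simp]: "dim_row (msum d f S) = d" "dim_col (msum d f S) = d"
  by (simp_all add: msum_def)

lemma msum_mult_left:
  assumes A: "A \<in> carrier_mat d d" and f: "\<And>x. x \<in> S \<Longrightarrow> f x \<in> carrier_mat d d"
  shows "A * msum d f S = msum d (\<lambda>x. A * f x) S"
proof (rule eq_matI)
  fix i j assume "i < dim_row (msum d (\<lambda>x. A * f x) S)" "j < dim_col (msum d (\<lambda>x. A * f x) S)"
  then have i: "i < d" and j: "j < d" by auto
  have "(A * msum d f S) $$ (i,j) = (\<Sum>k<d. A $$ (i,k) * (\<Sum>x\<in>S. f x $$ (k,j)))"
    by (subst mult_entry[OF A msum_carrier i j]) (use i j in simp)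
  also have "\<dots> = (\<Sum>x\<in>S. \<Sum>k<d. A $$ (i,k) * f x $$ (k,j))"
    by (simp add: sum_distrib_left sum.swap[of _ S])
  also have "\<dots> = (\<Sum>x\<in>S. (A * f x) $$ (i,j))"
    using i j by (intro sum.cong refl) (simp add: mult_entry[OF A f])
  finally show "(A * msum d f S) $$ (i,j) = msum d (\<lambda>x. A * f x) S $$ (i,j)" using i j by simp
qed (use A in auto)

lemma msum_mult_right:
  assumes B: "B \<in> carrier_mat d d" and f: "\<And>x. x \<in> S \<Longrightarrow> f x \<in> carrier_mat d d"
  shows "msum d f S * B = msum d (\<lambda>x. f x * B) S"
proof (rule eq_matI)
  fix i j assume "i < dim_row (msum d (\<lambda>x. f x * B) S)" "j < dim_col (msum d (\<lambda>x. f x * B) S)"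
  then have i: "i < d" and j: "j < d" by auto
  have "(msum d f S * B) $$ (i,j) = (\<Sum>k<d. (\<Sum>x\<in>S. f x $$ (i,k)) * B $$ (k,j))"
    by (subst mult_entry[OF msum_carrier B i j]) (use i j in simp)
  also have "\<dots> = (\<Sum>x\<in>S. \<Sum>k<d. f x $$ (i,k) * B $$ (k,j))"
    by (simp add: sum_distrib_right sum.swap[of _ S])
  also have "\<dots> = (\<Sum>x\<in>S. (f x * B) $$ (i,j))"
    using i j by (intro sum.cong refl) (simp add: mult_entry[OF f B])
  finally show "(msum d f S * B) $$ (i,j) = msum d (\<lambda>x. f x * B) S $$ (i,j)" using i j by simp
qed (use B in auto)

lemma unitary_adj_left: assumes "unitary_mat d U" shows "adj U * U = 1\<^sub>m d"
proof -
  have U: "U \<in> carrier_mat d d" and e: "U * adj U = 1\<^sub>m d" using assms unfolding unitary_mat_def by auto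
  show ?thesis by (rule mat_mult_left_right_inverse[OF U adj_carrier[OF U] e])
qed

lemma conj_pauli:
  assumes U: "unitary_mat (2^n) U" and cl: "\<forall>P\<in>Pn n. adj U * P * U \<in> Pn n"
    and P: "P \<in> Qn_star n" and rho: "\<rho> \<in> carrier_mat (2^n) (2^n)"
  shows "pi_phase n (adj U * P * U) \<in> Qn_star n
    \<and> (adj U * P * U) * \<rho> * (adj U * P * U)
       = pi_phase n (adj U * P * U) * \<rho> * pi_phase n (adj U * P * U)"
proof -
  let ?d = "2^n :: nat"
  define W where "W = adj U"
  have Uc: "U \<in> carrier_mat ?d ?d" and UU: "U * W = 1\<^sub>m ?d" using U unfolding unitary_mat_def W_def by auto
  have WU: "W * U = 1\<^sub>m ?d" unfolding W_def by (rule unitary_adj_left[OF U])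
  have Wc: "W \<in> carrier_mat ?d ?d" using Uc unfolding W_def by simp
  have PQ: "P \<in> Qn n" "P \<noteq> 1\<^sub>m ?d" using P unfolding Qn_star_def by auto
  have Pc: "P \<in> carrier_mat ?d ?d" by (rule Qn_carrier[OF PQ(1)])
  have "P \<in> Pn n" unfolding Pn_def phases_def using PQ(1) smult_one_mat1[of P] by force
  then have "W * P * U \<in> Pn n" using cl unfolding W_def by blast
  then obtain c Q where cQ: "c \<in> phases" "Q \<in> Qn n" and V: "W * P * U = c \<cdot>\<^sub>m Q"
    unfolding Pn_def by blast
  have Qc: "Q \<in> carrier_mat ?d ?d" by (rule Qn_carrier[OF cQ(2)])
  have pi: "pi_phase n (W * P * U) = Q" by (rule pi_phase_eq[OF cQ V])
  have "adj (W * P * U) = adj U * adj (W * P)"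
    by (rule adj_mult[OF mult_carrier_mat[OF Wc Pc] Uc])
  also have "\<dots> = W * (adj P * adj W)"
    using adj_mult[OF Wc Pc] unfolding W_def by simp
  also have "\<dots> = W * P * U" using Qn_adj[OF PQ(1)] assoc_mult_mat[OF Wc Pc Uc] unfolding W_def by simp
  finally have herm: "adj (W * P * U) = W * P * U" .
  then have "cnj c \<cdot>\<^sub>m Q = c \<cdot>\<^sub>m Q" unfolding V adj_smult Qn_adj[OF cQ(2)] .
  moreover obtain i j where ij: "i < ?d" "j < ?d" "Q $$ (i,j) \<noteq> 0"
    using cQ(2) pauli_string_nz unfolding Qn_def by blast
  ultimately have "cnj c * Q $$ (i,j) = c * Q $$ (i,j)"
    using Qc by (metis carrier_matD index_smult_mat(1))
  then have "cnj c = c" using ij(3) by simp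
  then have c2: "c * c = 1" using cQ(1) unfolding phases_def by auto
  have "(W * P * U) * \<rho> * (W * P * U) = (c \<cdot>\<^sub>m Q) * \<rho> * (c \<cdot>\<^sub>m Q)" by (simp add: V)
  also have "\<dots> = (c * c) \<cdot>\<^sub>m (Q * \<rho> * Q)"
    using Qc rho by (simp add: mult_smult_assoc_mat[of _ ?d ?d] mult_smult_distrib[of _ ?d ?d] smult_smult_mat)
  also have "\<dots> = Q * \<rho> * Q" using c2 smult_one_mat1 by simp
  finally have eq: "(W * P * U) * \<rho> * (W * P * U) = Q * \<rho> * Q" .
  have "Q \<noteq> 1\<^sub>m ?d"
  proof
    assume Q1: "Q = 1\<^sub>m ?d"
    have WPc: "W * P \<in> carrier_mat ?d ?d" using Wc Pc by simp
    have WPUc: "W * P * U \<in> carrier_mat ?d ?d" using WPc Uc by simp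
    have "U * (W * P * U) * W = U * ((W * P * U) * W)" by (rule assoc_mult_mat[OF Uc WPUc Wc])
    also have "(W * P * U) * W = (W * P) * (U * W)" by (rule assoc_mult_mat[OF WPc Uc Wc])
    also have "\<dots> = W * P" using UU right_mult_one_mat[OF WPc] by simp
    also have "U * (W * P) = (U * W) * P" by (rule assoc_mult_mat[OF Uc Wc Pc, symmetric])
    also have "\<dots> = P" using UU Pc by simp
    finally have "P = U * (c \<cdot>\<^sub>m 1\<^sub>m ?d) * W" using V Q1 by simp
    also have "U * (c \<cdot>\<^sub>m 1\<^sub>m ?d) = c \<cdot>\<^sub>m U"
      using mult_smult_distrib[OF Uc one_carrier_mat, of c] right_mult_one_mat[OF Uc] by simp
    also have "(c \<cdot>\<^sub>m U) * W = c \<cdot>\<^sub>m (U * W)" by (rule mult_smult_assoc_mat[OF Uc Wc])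
    also have "\<dots> = c \<cdot>\<^sub>m 1\<^sub>m ?d" using UU by simp
    finally have "P = c \<cdot>\<^sub>m 1\<^sub>m ?d" .
    then have "P = 1\<^sub>m ?d" using Qn_prop[OF PQ(1) one_in_Qn] by blast
    then show False using PQ(2) by simp
  qed
  then have "Q \<in> Qn_star n" using cQ(2) unfolding Qn_star_def by simp
  then show ?thesis using eq pi unfolding W_def by simp
qed

lemma sum_divmod': "(\<Sum>r<(a::nat)*b. f r) = (\<Sum>x<a. \<Sum>y<b. (f (x*b+y) :: 'c::comm_monoid_add))"
proof -
  have "(\<Sum>r<a*b. f r) = (\<Sum>r<a*b. (\<lambda>x y. f (x*b+y)) (r div b) (r mod b))"
    by (simp add: div_mult_mod_eq)
  also have "\<dots> = (\<Sum>x<a. \<Sum>y<b. f (x*b+y))" by (rule sum_divmod)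
  finally show ?thesis .
qed

lemma lt_sq: "(a::nat) < d \<Longrightarrow> x < d \<Longrightarrow> a * d + x < d * d"
  by (metis add_less_cancel_left less_le_trans mult_Suc mult_le_mono1 Suc_leI add.commute)

lemma sandwich_entry:
  assumes P: "P \<in> carrier_mat d d" and a: "a < d" and c: "c < d" and i: "i < d" and j: "j < d"
  shows "(P * mat d d (\<lambda>(x,y). if x = a \<and> y = c then e else 0) * P) $$ (i,j) = P $$ (i,a) * e * P $$ (c,j)"
proof -
  let ?E = "mat d d (\<lambda>(x,y). if x = a \<and> y = c then e else 0)"
  have Ec: "?E \<in> carrier_mat d d" by simp
  have PE: "(P * ?E) $$ (i,y) = (if y = c then P $$ (i,a) * e else 0)" if y: "y < d" for y
  proof -
    have "(P * ?E) $$ (i,y) = (\<Sum>x<d. P $$ (i,x) * ?E $$ (x,y))" by (rule mult_entry[OF P Ec i y])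
    also have "\<dots> = (\<Sum>x<d. if x = a then (if y = c then P $$ (i,a) * e else 0) else 0)"
      using y by (intro sum.cong refl) auto
    also have "\<dots> = (if y = c then P $$ (i,a) * e else 0)" using a by simp
    finally show ?thesis .
  qed
  have "(P * ?E * P) $$ (i,j) = (\<Sum>y<d. (P * ?E) $$ (i,y) * P $$ (y,j))"
    by (rule mult_entry[OF mult_carrier_mat[OF P Ec] P i j])
  also have "\<dots> = (\<Sum>y<d. if y = c then P $$ (i,a) * e * P $$ (c,j) else 0)"
    by (intro sum.cong refl) (simp add: PE)
  also have "\<dots> = P $$ (i,a) * e * P $$ (c,j)" using c by simp
  finally show ?thesis .
qed

lemma Phi_carrier: "Phi n \<in> carrier_mat (2^n * 2^n) 1"
  by (simp add: Phi_def)

lemma Phi_index: "r < 2^n * 2^n \<Longrightarrow> Phi n $$ (r,0) =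
   (if r div 2^n = r mod 2^n then complex_of_real (1 / sqrt (2^n)) else 0)"
  by (simp add: Phi_def)

lemma ent_fid_pauli: "ent_fid n (pauli_channel n chi) = complex_of_real (chi (1\<^sub>m (2^n)))"
proof -
  define d where "d = (2::nat)^n"
  define s where "s = complex_of_real (1 / sqrt (2^n))"
  define C where "C = pauli_channel n chi"
  have dpos: "d > 0" unfolding d_def by simp
  have "(1 / sqrt (2^n::real)) * (1 / sqrt (2^n)) = 1 / 2^n" by simp
  then have ss: "s * s = 1 / of_nat d" unfolding s_def d_def
    by (metis of_real_mult of_real_divide of_real_1 of_real_numeral of_real_power of_nat_numeral of_nat_power)
  have cs: "cnj s = s" unfolding s_def by simp
  have Phic: "Phi n \<in> carrier_mat (d*d) 1" using Phi_carrier unfolding d_def .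
  have Phii: "Phi n $$ (r,0) = (if r div d = r mod d then s else 0)" if "r < d*d" for r
    using Phi_index[of r n] that unfolding d_def s_def by simp
  define M where "M = Phi n * adj (Phi n)"
  have Mi: "M $$ (r,t) = Phi n $$ (r,0) * cnj (Phi n $$ (t,0))" if "r < d*d" "t < d*d" for r t
  proof -
    have "M $$ (r,t) = (\<Sum>k<1. Phi n $$ (r,k) * adj (Phi n) $$ (k,t))"
      unfolding M_def by (rule mult_entry[OF Phic adj_carrier[OF Phic] that])
    then show ?thesis using that Phic by simp
  qed
  define E where "E a c = mat d d (\<lambda>(x,y). if x = a \<and> y = c then 1 / of_nat d else (0::complex))" for a c
  have Bac: "mat d d (\<lambda>(x,y). M $$ (a*d+x, c*d+y)) = E a c" if ac: "a < d" "c < d" for a c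
  proof (rule eq_matI)
    fix x y assume "x < dim_row (E a c)" "y < dim_col (E a c)"
    then have xy: "x < d" "y < d" unfolding E_def by auto
    have "M $$ (a*d+x, c*d+y) = Phi n $$ (a*d+x,0) * cnj (Phi n $$ (c*d+y,0))"
      by (rule Mi) (use lt_sq ac xy in auto)
    also have "\<dots> = (if x = a then s else 0) * cnj (if y = c then s else 0)"
      using Phii[OF lt_sq[OF ac(1) xy(1)]] Phii[OF lt_sq[OF ac(2) xy(2)]] xy by (auto)
    also have "\<dots> = E a c $$ (x,y)" unfolding E_def using xy cs ss by simp
    finally show "mat d d (\<lambda>(x,y). M $$ (a*d+x, c*d+y)) $$ (x,y) = E a c $$ (x,y)" using xy by simp
  qed (simp_all add: E_def)
  define Y where "Y = id_tensor d C M"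
  have Yc: "Y \<in> carrier_mat (d*d) (d*d)" unfolding Y_def id_tensor_def by simp
  have Yi: "Y $$ (a*d+a, c*d+c) = C (E a c) $$ (a,c)" if ac: "a < d" "c < d" for a c
  proof -
    have "Y $$ (a*d+a, c*d+c) = C (mat d d (\<lambda>(x,y). M $$ (a*d+x, c*d+y))) $$ (a,c)"
      unfolding Y_def id_tensor_def using lt_sq[OF ac(1) ac(1)] lt_sq[OF ac(2) ac(2)] ac by simp
    then show ?thesis using Bac[OF ac] by simp
  qed
  have Ci: "C (E a c) $$ (a,c) = (\<Sum>P\<in>Qn n. complex_of_real (chi P) * (P $$ (a,a) * (1 / of_nat d) * P $$ (c,c)))"
    if ac: "a < d" "c < d" for a c
  proof -
    have "C (E a c) $$ (a,c) = (\<Sum>P\<in>Qn n. (complex_of_real (chi P) \<cdot>\<^sub>m (P * E a c * P)) $$ (a,c))"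
      unfolding C_def pauli_channel_def d_def[symmetric] using ac by simp
    also have "\<dots> = (\<Sum>P\<in>Qn n. complex_of_real (chi P) * (P $$ (a,a) * (1 / of_nat d) * P $$ (c,c)))"
    proof (intro sum.cong refl)
      fix P assume "P \<in> Qn n"
      then have Pc: "P \<in> carrier_mat d d" using Qn_carrier unfolding d_def by blast
      have "(P * E a c * P) $$ (a,c) = P $$ (a,a) * (1 / of_nat d) * P $$ (c,c)"
        unfolding E_def by (rule sandwich_entry[OF Pc ac ac])
      then show "(complex_of_real (chi P) \<cdot>\<^sub>m (P * E a c * P)) $$ (a,c) = complex_of_real (chi P) * (P $$ (a,a) * (1 / of_nat d) * P $$ (c,c))"
        using Pc ac by (simp add: E_def)
    qed
    finally show ?thesis .
  qed
  have adjPc: "adj (Phi n) \<in> carrier_mat 1 (d*d)" using Phic by simp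
  have APY: "adj (Phi n) * Y \<in> carrier_mat 1 (d*d)" using adjPc Yc by simp
  have "ent_fid n C = (adj (Phi n) * Y * Phi n) $$ (0,0)"
    unfolding ent_fid_def Y_def M_def d_def ..
  also have "\<dots> = (\<Sum>t<d*d. (adj (Phi n) * Y) $$ (0,t) * Phi n $$ (t,0))"
    by (rule mult_entry[OF APY Phic]) auto
  also have "\<dots> = (\<Sum>t<d*d. (\<Sum>r<d*d. cnj (Phi n $$ (r,0)) * Y $$ (r,t)) * Phi n $$ (t,0))"
  proof (intro sum.cong refl)
    fix t assume "t \<in> {..<d*d}"
    then have t: "t < d*d" by simp
    have "(adj (Phi n) * Y) $$ (0,t) = (\<Sum>r<d*d. adj (Phi n) $$ (0,r) * Y $$ (r,t))"
      by (rule mult_entry[OF adjPc Yc _ t]) simp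
    also have "\<dots> = (\<Sum>r<d*d. cnj (Phi n $$ (r,0)) * Y $$ (r,t))"
      by (intro sum.cong refl) (use Phic in auto)
    finally show "(adj (Phi n) * Y) $$ (0,t) * Phi n $$ (t,0) = (\<Sum>r<d*d. cnj (Phi n $$ (r,0)) * Y $$ (r,t)) * Phi n $$ (t,0)"
      by simp
  qed
  also have "\<dots> = (\<Sum>r<d*d. \<Sum>t<d*d. cnj (Phi n $$ (r,0)) * Y $$ (r,t) * Phi n $$ (t,0))"
    unfolding sum_distrib_right by (rule sum.swap)
  also have "\<dots> = (\<Sum>a<d. \<Sum>x<d. \<Sum>c<d. \<Sum>y<d. cnj (Phi n $$ (a*d+x,0)) * Y $$ (a*d+x,c*d+y) * Phi n $$ (c*d+y,0))"
    by (simp add: sum_divmod')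
  also have "\<dots> = (\<Sum>a<d. \<Sum>c<d. s * s * Y $$ (a*d+a, c*d+c))"
  proof (rule sum.cong[OF refl])
    fix a assume "a \<in> {..<d}"
    then have a: "a < d" by simp
    have inner: "(\<Sum>c<d. \<Sum>y<d. cnj (Phi n $$ (a*d+x,0)) * Y $$ (a*d+x,c*d+y) * Phi n $$ (c*d+y,0))
       = (if x = a then (\<Sum>c<d. s * s * Y $$ (a*d+a, c*d+c)) else 0)" if x: "x < d" for x
    proof (cases "x = a")
      case True
      have "(\<Sum>c<d. \<Sum>y<d. cnj (Phi n $$ (a*d+x,0)) * Y $$ (a*d+x,c*d+y) * Phi n $$ (c*d+y,0))
          = (\<Sum>c<d. \<Sum>y<d. if y = c then s * s * Y $$ (a*d+a, c*d+c) else 0)"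
      proof (intro sum.cong refl)
        fix c y assume "c \<in> {..<d}" "y \<in> {..<d}"
        then have cy: "c < d" "y < d" by auto
        show "cnj (Phi n $$ (a*d+x,0)) * Y $$ (a*d+x,c*d+y) * Phi n $$ (c*d+y,0)
            = (if y = c then s * s * Y $$ (a*d+a, c*d+c) else 0)"
          using Phii[OF lt_sq[OF a x]] Phii[OF lt_sq[OF cy]] True x cy cs by (auto simp: ac_simps)
      qed
      also have "\<dots> = (\<Sum>c<d. s * s * Y $$ (a*d+a, c*d+c))" by simp
      finally show ?thesis using True by simp
    next
      case False
      have "cnj (Phi n $$ (a*d+x,0)) = 0" using Phii[OF lt_sq[OF a x]] False x by simp
      then show ?thesis using False by simp
    qed
    have "(\<Sum>x<d. \<Sum>c<d. \<Sum>y<d. cnj (Phi n $$ (a*d+x,0)) * Y $$ (a*d+x,c*d+y) * Phi n $$ (c*d+y,0))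
       = (\<Sum>x<d. if x = a then (\<Sum>c<d. s * s * Y $$ (a*d+a, c*d+c)) else 0)"
      by (intro sum.cong refl) (simp add: inner)
    also have "\<dots> = (\<Sum>c<d. s * s * Y $$ (a*d+a, c*d+c))" using a by simp
    finally show "(\<Sum>x<d. \<Sum>c<d. \<Sum>y<d. cnj (Phi n $$ (a*d+x,0)) * Y $$ (a*d+x,c*d+y) * Phi n $$ (c*d+y,0))
       = (\<Sum>c<d. s * s * Y $$ (a*d+a, c*d+c))" .
  qed
  also have "\<dots> = (\<Sum>a<d. \<Sum>c<d. (1 / of_nat d) * (\<Sum>P\<in>Qn n. complex_of_real (chi P) * (P $$ (a,a) * (1 / of_nat d) * P $$ (c,c))))"
    by (intro sum.cong refl) (simp add: Yi Ci ss)
  also have "\<dots> = (\<Sum>P\<in>Qn n. complex_of_real (chi P) * (1 / of_nat d) * (1 / of_nat d) * ((\<Sum>a<d. P $$ (a,a)) * (\<Sum>c<d. P $$ (c,c))))"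
  proof -
    let ?f = "\<lambda>P a c. complex_of_real (chi P) * (P $$ (a,a) * (1 / of_nat d) * P $$ (c,c))"
    have "(\<Sum>a<d. \<Sum>c<d. (1 / of_nat d) * (\<Sum>P\<in>Qn n. ?f P a c)) = (\<Sum>a<d. \<Sum>c<d. \<Sum>P\<in>Qn n. (1 / of_nat d) * ?f P a c)"
      by (simp only: sum_distrib_left)
    also have "\<dots> = (\<Sum>a<d. \<Sum>P\<in>Qn n. \<Sum>c<d. (1 / of_nat d) * ?f P a c)"
      by (intro sum.cong refl) (rule sum.swap)
    also have "\<dots> = (\<Sum>P\<in>Qn n. \<Sum>a<d. \<Sum>c<d. (1 / of_nat d) * ?f P a c)"
      by (rule sum.swap)
    also have "\<dots> = (\<Sum>P\<in>Qn n. complex_of_real (chi P) * (1 / of_nat d) * (1 / of_nat d) * ((\<Sum>a<d. P $$ (a,a)) * (\<Sum>c<d. P $$ (c,c))))"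
    proof (intro sum.cong refl)
      fix P
      have "(\<Sum>a<d. \<Sum>c<d. (1 / of_nat d) * ?f P a c) = (\<Sum>a<d. \<Sum>c<d. (complex_of_real (chi P) * (1 / of_nat d) * (1 / of_nat d)) * (P $$ (a,a) * P $$ (c,c)))"
        by (intro sum.cong refl) (simp add: ac_simps)
      also have "\<dots> = (complex_of_real (chi P) * (1 / of_nat d) * (1 / of_nat d)) * ((\<Sum>a<d. P $$ (a,a)) * (\<Sum>c<d. P $$ (c,c)))"
        by (simp only: sum_distrib_left[symmetric] sum_product)
      finally show "(\<Sum>a<d. \<Sum>c<d. (1 / of_nat d) * ?f P a c) = complex_of_real (chi P) * (1 / of_nat d) * (1 / of_nat d) * ((\<Sum>a<d. P $$ (a,a)) * (\<Sum>c<d. P $$ (c,c)))" .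
    qed
    finally show ?thesis .
  qed
  also have "\<dots> = (\<Sum>P\<in>Qn n. if P = 1\<^sub>m d then complex_of_real (chi P) else 0)"
  proof (intro sum.cong refl)
    fix P assume P: "P \<in> Qn n"
    show "complex_of_real (chi P) * (1 / of_nat d) * (1 / of_nat d) * ((\<Sum>a<d. P $$ (a,a)) * (\<Sum>c<d. P $$ (c,c)))
        = (if P = 1\<^sub>m d then complex_of_real (chi P) else 0)"
      using trace_Qn[OF P] dpos unfolding d_def by simp
  qed
  also have "\<dots> = complex_of_real (chi (1\<^sub>m d))"
    using one_in_Qn[of n] finite_Qn[of n] unfolding d_def by simp
  finally show ?thesis unfolding C_def d_def .
qed

lemma assoc': "dim_col A = dim_row B \<Longrightarrow> dim_col B = dim_row C \<Longrightarrow> A * B * C = A * (B * (C :: complex mat))"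
  by (rule assoc_mult_mat[of A "dim_row A" "dim_col A" B "dim_col B" C "dim_col C"]) (auto intro: carrier_matI)

lemma smult_r': "dim_col A = dim_row B \<Longrightarrow> A * (k \<cdot>\<^sub>m B) = k \<cdot>\<^sub>m (A * (B :: complex mat))"
  by (rule mult_smult_distrib[of A "dim_row A" "dim_col A" B "dim_col B"]) (auto intro: carrier_matI)

lemma smult_l': "dim_col A = dim_row B \<Longrightarrow> (k \<cdot>\<^sub>m A) * B = k \<cdot>\<^sub>m (A * (B :: complex mat))"
  by (rule mult_smult_assoc_mat[of A "dim_row A" "dim_col A" B "dim_col B"]) (auto intro: carrier_matI)

lemma step1:
  assumes Uc: "U \<in> carrier_mat (2^n) (2^n)" and rho: "\<rho> \<in> carrier_mat (2^n) (2^n)"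
  shows "adj U * pauli_channel n chi (U * \<rho> * adj U) * U
    = msum (2^n) (\<lambda>P. complex_of_real (chi P) \<cdot>\<^sub>m ((adj U * P * U) * \<rho> * (adj U * P * U))) (Qn n)"
proof -
  let ?d = "2^n :: nat"
  define W where "W = adj U"
  have Wc: "W \<in> carrier_mat ?d ?d" using Uc unfolding W_def by simp
  define X where "X = U * \<rho> * W"
  have Xc: "X \<in> carrier_mat ?d ?d" using Uc rho Wc unfolding X_def by simp
  have fc: "complex_of_real (chi P) \<cdot>\<^sub>m (P * X * P) \<in> carrier_mat ?d ?d" if "P \<in> Qn n" for P
    using Qn_carrier[OF that] Xc by simp
  have fc2: "W * (complex_of_real (chi P) \<cdot>\<^sub>m (P * X * P)) \<in> carrier_mat ?d ?d" if "P \<in> Qn n" for P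
    using fc[OF that] Wc by simp
  have "W * pauli_channel n chi X * U = W * msum ?d (\<lambda>P. complex_of_real (chi P) \<cdot>\<^sub>m (P * X * P)) (Qn n) * U"
    unfolding pauli_channel_def ..
  also have "\<dots> = msum ?d (\<lambda>P. W * (complex_of_real (chi P) \<cdot>\<^sub>m (P * X * P))) (Qn n) * U"
    by (subst msum_mult_left[OF Wc fc]) auto
  also have "\<dots> = msum ?d (\<lambda>P. W * (complex_of_real (chi P) \<cdot>\<^sub>m (P * X * P)) * U) (Qn n)"
    by (subst msum_mult_right[OF Uc fc2]) auto
  also have "\<dots> = msum ?d (\<lambda>P. complex_of_real (chi P) \<cdot>\<^sub>m ((W * P * U) * \<rho> * (W * P * U))) (Qn n)"
    unfolding msum_def
  proof (intro arg_cong[where f = "mat ?d ?d"] ext, clarify, intro sum.cong refl arg_cong[where f = "\<lambda>M. M $$ _"])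
    fix P assume P: "P \<in> Qn n"
    have Pc: "P \<in> carrier_mat ?d ?d" by (rule Qn_carrier[OF P])
    have dims: "dim_row U = ?d" "dim_col U = ?d" "dim_row W = ?d" "dim_col W = ?d"
      "dim_row P = ?d" "dim_col P = ?d" "dim_row \<rho> = ?d" "dim_col \<rho> = ?d"
      using Uc Wc Pc rho by auto
    show "W * (complex_of_real (chi P) \<cdot>\<^sub>m (P * X * P)) * U = complex_of_real (chi P) \<cdot>\<^sub>m (W * P * U * \<rho> * (W * P * U))"
      unfolding X_def using dims by (simp add: assoc' smult_r' smult_l')
  qed
  finally show ?thesis unfolding W_def X_def .
qed

theorem lemma7:
  fixes n K :: nat and chi :: "complex mat \<Rightarrow> real"
    and p :: "nat \<Rightarrow> real" and U :: "nat \<Rightarrow> complex mat"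
  assumes "n \<ge> 1"
    and "is_pauli_channel_coeffs n chi"
    and "pauli_mixing n K p U"
  shows "\<forall>\<rho>\<in>carrier_mat (2^n) (2^n).
           twirl n K p U (pauli_channel n chi) \<rho>
         = depol n (ent_fid n (pauli_channel n chi)) \<rho>"
proof
  fix \<rho> :: "complex mat" assume rho: "\<rho> \<in> carrier_mat (2^n) (2^n)"
  let ?d = "2^n :: nat"
  let ?one = "1\<^sub>m ?d :: complex mat"
  let ?C = "pauli_channel n chi"
  have psum: "(\<Sum>i<K. p i) = 1" and Uu: "\<And>i. i < K \<Longrightarrow> unitary_mat ?d (U i)"
    and cl: "\<And>i. i < K \<Longrightarrow> \<forall>P\<in>Pn n. adj (U i) * P * U i \<in> Pn n"
    and mix: "\<And>P P'. P \<in> Qn_star n \<Longrightarrow> P' \<in> Qn_star n \<Longrightarrow>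
        (\<Sum>i\<in>{i. i < K \<and> pi_phase n (adj (U i) * P * U i) = P'}. p i) = 1 / (4^n - 1)"
    using assms(3) unfolding pauli_mixing_def by auto
  have chisum: "(\<Sum>P\<in>Qn n. chi P) = 1" using assms(2) unfolding is_pauli_channel_coeffs_def by auto
  have Uc: "U i \<in> carrier_mat ?d ?d" if "i < K" for i using Uu[OF that] unfolding unitary_mat_def by auto
  have finQ: "finite (Qn n)" by (rule finite_Qn)
  have finQs: "finite (Qn_star n)" unfolding Qn_star_def using finQ by simp
  have Qs_eq: "Qn_star n = Qn n - {?one}" unfolding Qn_star_def ..
  define S where "S a b = (\<Sum>Q\<in>Qn_star n. (Q * \<rho> * Q) $$ (a,b))" for a b
  define r where "r = (1::complex) / (4^n - 1)"
  have r_real: "complex_of_real (1 / (4^n - 1)) = r" unfolding r_def by simp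
  define V where "V i P = adj (U i) * P * U i" for i P
  have Vone: "V i ?one = ?one" if "i < K" for i
  proof -
    have "V i ?one = adj (U i) * U i" unfolding V_def using Uc[OF that] by simp
    also have "\<dots> = ?one" by (rule unitary_adj_left[OF Uu[OF that]])
    finally show ?thesis .
  qed
  have term1: "(\<Sum>i<K. complex_of_real (p i) * (V i ?one * \<rho> * V i ?one) $$ (a,b)) = \<rho> $$ (a,b)"
    if ab: "a < ?d" "b < ?d" for a b
  proof -
    have "(\<Sum>i<K. complex_of_real (p i) * (V i ?one * \<rho> * V i ?one) $$ (a,b))
        = (\<Sum>i<K. complex_of_real (p i) * \<rho> $$ (a,b))"
      by (intro sum.cong refl) (use Vone rho in simp)
    also have "\<dots> = complex_of_real (\<Sum>i<K. p i) * \<rho> $$ (a,b)" by (simp add: sum_distrib_right)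
    finally show ?thesis using psum by simp
  qed
  have term2: "(\<Sum>i<K. complex_of_real (p i) * (V i P * \<rho> * V i P) $$ (a,b)) = r * S a b"
    if P: "P \<in> Qn_star n" and ab: "a < ?d" "b < ?d" for P a b
  proof -
    define g where "g i = pi_phase n (V i P)" for i
    have cp: "g i \<in> Qn_star n \<and> V i P * \<rho> * V i P = g i * \<rho> * g i" if "i < K" for i
      using conj_pauli[OF Uu[OF that] cl[OF that] P rho] unfolding g_def V_def by blast
    have "(\<Sum>i<K. complex_of_real (p i) * (V i P * \<rho> * V i P) $$ (a,b))
        = (\<Sum>i<K. complex_of_real (p i) * (g i * \<rho> * g i) $$ (a,b))"
      by (intro sum.cong refl) (use cp in simp)
    also have "\<dots> = (\<Sum>Q\<in>Qn_star n. \<Sum>i\<in>{i. i \<in> {..<K} \<and> g i = Q}. complex_of_real (p i) * (g i * \<rho> * g i) $$ (a,b))"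
      by (rule sum.group[symmetric]) (use cp finQs in auto)
    also have "\<dots> = (\<Sum>Q\<in>Qn_star n. complex_of_real (\<Sum>i\<in>{i. i < K \<and> pi_phase n (adj (U i) * P * U i) = Q}. p i) * (Q * \<rho> * Q) $$ (a,b))"
    proof (rule sum.cong[OF refl])
      fix Q assume "Q \<in> Qn_star n"
      have "(\<Sum>i\<in>{i. i \<in> {..<K} \<and> g i = Q}. complex_of_real (p i) * (g i * \<rho> * g i) $$ (a,b))
          = (\<Sum>i\<in>{i. i \<in> {..<K} \<and> g i = Q}. complex_of_real (p i) * (Q * \<rho> * Q) $$ (a,b))"
        by (intro sum.cong refl) auto
      also have "\<dots> = complex_of_real (\<Sum>i\<in>{i. i \<in> {..<K} \<and> g i = Q}. p i) * (Q * \<rho> * Q) $$ (a,b)"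
        by (simp add: sum_distrib_right)
      finally have eq1: "(\<Sum>i\<in>{i. i \<in> {..<K} \<and> g i = Q}. complex_of_real (p i) * (g i * \<rho> * g i) $$ (a,b))
          = complex_of_real (\<Sum>i\<in>{i. i \<in> {..<K} \<and> g i = Q}. p i) * (Q * \<rho> * Q) $$ (a,b)" .
      have seteq: "{i. i \<in> {..<K} \<and> g i = Q} = {i. i < K \<and> pi_phase n (adj (U i) * P * U i) = Q}"
        unfolding g_def V_def by auto
      from eq1 show "(\<Sum>i\<in>{i. i \<in> {..<K} \<and> g i = Q}. complex_of_real (p i) * (g i * \<rho> * g i) $$ (a,b))
          = complex_of_real (\<Sum>i\<in>{i. i < K \<and> pi_phase n (adj (U i) * P * U i) = Q}. p i) * (Q * \<rho> * Q) $$ (a,b)"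
        by (simp only: seteq)
    qed
    also have "\<dots> = (\<Sum>Q\<in>Qn_star n. r * (Q * \<rho> * Q) $$ (a,b))"
      by (intro sum.cong refl) (simp add: mix[OF P] r_real r_def)
    also have "\<dots> = r * S a b" unfolding S_def by (simp add: sum_distrib_left)
    finally show ?thesis .
  qed
  have chis: "(\<Sum>P\<in>Qn_star n. complex_of_real (chi P)) = 1 - complex_of_real (chi ?one)"
  proof -
    have "(\<Sum>P\<in>Qn n. chi P) = chi ?one + (\<Sum>P\<in>Qn n - {?one}. chi P)"
      by (rule sum.remove[OF finQ one_in_Qn])
    then have "(\<Sum>P\<in>Qn_star n. chi P) = 1 - chi ?one" using chisum Qs_eq by simp
    then show ?thesis by (metis of_real_sum of_real_1 of_real_diff)
  qed
  show "twirl n K p U ?C \<rho> = depol n (ent_fid n ?C) \<rho>"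
  proof (rule eq_matI)
    fix a b assume "a < dim_row (depol n (ent_fid n ?C) \<rho>)" "b < dim_col (depol n (ent_fid n ?C) \<rho>)"
    then have ab: "a < ?d" "b < ?d" using rho unfolding depol_def by auto
    have "twirl n K p U ?C \<rho> $$ (a,b)
        = (\<Sum>i<K. complex_of_real (p i) * (\<Sum>P\<in>Qn n. complex_of_real (chi P) * (V i P * \<rho> * V i P) $$ (a,b)))"
      unfolding twirl_def using ab
    proof (simp only: msum_index, intro sum.cong refl)
      fix i assume "i \<in> {..<K}"
      then have i: "i < K" by simp
      have Vc: "V i P * \<rho> * V i P \<in> carrier_mat ?d ?d" if "P \<in> Qn n" for P
        unfolding V_def by (intro carrier_matI) (use Uc[OF i] rho Qn_carrier[OF that] in auto)
      show "(complex_of_real (p i) \<cdot>\<^sub>m (adj (U i) * ?C (U i * \<rho> * adj (U i)) * U i)) $$ (a,b)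
          = complex_of_real (p i) * (\<Sum>P\<in>Qn n. complex_of_real (chi P) * (V i P * \<rho> * V i P) $$ (a,b))"
      proof -
        have inner: "(\<Sum>x\<in>Qn n. (complex_of_real (chi x) \<cdot>\<^sub>m (V i x * \<rho> * V i x)) $$ (a,b))
            = (\<Sum>x\<in>Qn n. complex_of_real (chi x) * (V i x * \<rho> * V i x) $$ (a,b))"
        proof (rule sum.cong[OF refl])
          fix x assume "x \<in> Qn n"
          from carrier_matD[OF Vc[OF this]] ab
          show "(complex_of_real (chi x) \<cdot>\<^sub>m (V i x * \<rho> * V i x)) $$ (a,b) = complex_of_real (chi x) * (V i x * \<rho> * V i x) $$ (a,b)"
            by simp
        qed
        show ?thesis unfolding step1[OF Uc[OF i] rho] using ab inner by (simp add: V_def)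
      qed
    qed
    also have "\<dots> = (\<Sum>P\<in>Qn n. complex_of_real (chi P) * (\<Sum>i<K. complex_of_real (p i) * (V i P * \<rho> * V i P) $$ (a,b)))"
      by (simp only: sum_distrib_left mult.left_commute[of "complex_of_real (p _)"]) (rule sum.swap)
    also have "\<dots> = complex_of_real (chi ?one) * \<rho> $$ (a,b)
        + (\<Sum>P\<in>Qn_star n. complex_of_real (chi P) * (r * S a b))"
    proof -
      let ?f = "\<lambda>P. complex_of_real (chi P) * (\<Sum>i<K. complex_of_real (p i) * (V i P * \<rho> * V i P) $$ (a,b))"
      have "(\<Sum>P\<in>Qn n. ?f P) = ?f ?one + (\<Sum>P\<in>Qn n - {?one}. ?f P)"
        by (rule sum.remove[OF finQ one_in_Qn])
      also have "?f ?one = complex_of_real (chi ?one) * \<rho> $$ (a,b)" using term1[OF ab] by simp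
      also have "(\<Sum>P\<in>Qn n - {?one}. ?f P) = (\<Sum>P\<in>Qn_star n. complex_of_real (chi P) * (r * S a b))"
        unfolding Qs_eq[symmetric] by (intro sum.cong refl) (simp add: term2[OF _ ab])
      finally show ?thesis .
    qed
    also have "\<dots> = complex_of_real (chi ?one) * \<rho> $$ (a,b) + (1 - complex_of_real (chi ?one)) * r * S a b"
      by (simp add: sum_distrib_right[symmetric] chis)
    also have "\<dots> = depol n (ent_fid n ?C) \<rho> $$ (a,b)"
      unfolding depol_def ent_fid_pauli using ab rho by (simp add: S_def r_def)
    finally show "twirl n K p U ?C \<rho> $$ (a,b) = depol n (ent_fid n ?C) \<rho> $$ (a,b)" .
  next
    show "dim_row (twirl n K p U ?C \<rho>) = dim_row (depol n (ent_fid n ?C) \<rho>)"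
      unfolding twirl_def depol_def using rho by simp
    show "dim_col (twirl n K p U ?C \<rho>) = dim_col (depol n (ent_fid n ?C) \<rho>)"
      unfolding twirl_def depol_def using rho by simp
  qed
qed

end
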